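(* For $i=1,2$ let $\alpha_i\in[-1,1]$ and let $f_{\alpha_i}=h_{\alpha_i}+\overline{g_{\alpha_i}}\in S_H$ with $h_{\alpha_i}(z)+g_{\alpha_i}(z)=\dfrac{z(1-\alpha_i z)}{1-z^2}$ (the two maps may have different dilatations). If $\alpha_1=\alpha_2$, then for every $0\le t\le1$ the map $f=tf_{\alpha_1}+(1-t)f_{\alpha_2}$ belongs to $S_H$ and maps $E$ onto a domain convex in the direction of the imaginary axis.
   Context: $E=\{z\in\mathbb{C}:|z|<1\}$. A harmonic mapping $f=h+\overline{g}$ on $E$ (with $h,g$ analytic) is locally univalent and sense-preserving iff $h'\neq0$ in $E$ and its dilatation $\omega=g'/h'$ satisfies $|\omega|<1$ in $E$. $S_H$ denotes the class of harmonic, univalent, sense-preserving mappings $f=h+\overline{g}$ of $E$ normalized by $f(0)=0$, $f_z(0)=1$. A domain $\Omega$ is convex in the direction of the imaginary axis if every line parallel to the imaginary axis has connected or empty intersection with $\Omega$. *)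

theory Defs
  imports "HOL-Analysis.Analysis"
begin

abbreviation unit_disk :: "complex set" where
  "unit_disk \<equiv> ball 0 1"

definition harm :: "(complex \<Rightarrow> complex) \<Rightarrow> (complex \<Rightarrow> complex) \<Rightarrow> complex \<Rightarrow> complex" where
  "harm h g z = h z + cnj (g z)"

definition sense_preserving :: "(complex \<Rightarrow> complex) \<Rightarrow> (complex \<Rightarrow> complex) \<Rightarrow> bool" where
  "sense_preserving h g \<longleftrightarrow>
     (\<forall>z\<in>unit_disk. deriv h z \<noteq> 0 \<and> cmod (deriv g z / deriv h z) < 1)"

definition S_H :: "(complex \<Rightarrow> complex) \<Rightarrow> (complex \<Rightarrow> complex) \<Rightarrow> bool" where
  "S_H h g \<longleftrightarrow>
     h holomorphic_on unit_disk \<and> g holomorphic_on unit_disk \<and>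
     inj_on (harm h g) unit_disk \<and> sense_preserving h g \<and>
     h 0 = 0 \<and> g 0 = 0 \<and> deriv h 0 = 1"

definition convex_imag_dir :: "complex set \<Rightarrow> bool" where
  "convex_imag_dir \<Omega> \<longleftrightarrow> (\<forall>c::real. connected (\<Omega> \<inter> {w. Re w = c}))"

end

theory Submission
  imports Defs
begin



lemma rhp_prod:
  fixes a b :: complex and c :: real
  assumes "Re a > 0" "Re b > 0" "c \<ge> 0"
  shows "a * b \<noteq> - of_real c"
proof
  assume h: "a * b = - of_real c"
  have i: "Re a * Im b + Im a * Re b = 0" using arg_cong[OF h, of Im] by simp
  have r: "Re a * Re b - Im a * Im b = - c" using arg_cong[OF h, of Re] by simp
  have "Im b = - Im a * Re b / Re a" using i assms by (simp add: field_simps)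
  hence "Re a * Re b - Im a * Im b = Re a * Re b + (Im a)^2 * Re b / Re a"
    by (simp add: power2_eq_square)
  moreover have "(Im a)^2 * Re b / Re a \<ge> 0" using assms by simp
  moreover have "Re a * Re b > 0" using assms by simp
  ultimately show False using r assms by linarith
qed

lemma Re_cayley_pos:
  fixes z :: complex assumes "cmod z < 1"
  shows "Re ((1 + z) / (1 - z)) > 0"
proof -
  have nz: "1 - z \<noteq> 0" using assms by auto
  have e: "Re ((1 + z) / (1 - z)) = (1 - ((Re z)^2 + (Im z)^2)) / (cmod (1 - z))^2"
  proof -
    have "Re ((1 + z) / (1 - z)) = (Re (1 + z) * Re (1 - z) + Im (1 + z) * Im (1 - z)) / (cmod (1 - z))^2"
      by (rule Re_divide')
    also have "Re (1 + z) * Re (1 - z) + Im (1 + z) * Im (1 - z) = 1 - ((Re z)^2 + (Im z)^2)"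
      by (simp add: power2_eq_square algebra_simps)
    finally show ?thesis .
  qed
  have "(cmod z)^2 < 1" using power_strict_mono[OF assms norm_ge_zero, of 2] by simp
  hence "(Re z)^2 + (Im z)^2 < 1" by (simp add: cmod_power2)
  moreover have "(cmod (1 - z))^2 > 0" using nz by simp
  ultimately show ?thesis unfolding e by simp
qed

definition phi :: "real \<Rightarrow> complex \<Rightarrow> complex" where
  "phi a z = z * (1 - of_real a * z) / (1 - z\<^sup>2)"

definition psi :: "real \<Rightarrow> real \<Rightarrow> complex \<Rightarrow> complex" where
  "psi A B w = of_real A * w - of_real B / w"

lemma disk_ne: fixes z :: complex assumes "cmod z < 1" shows "1 - z \<noteq> 0" "1 + z \<noteq> 0" "1 - z\<^sup>2 \<noteq> 0"
proof -
  show a: "1 - z \<noteq> 0" using assms by auto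
  show b: "1 + z \<noteq> 0"
  proof
    assume "1 + z = 0" hence "z = -1" by (simp add: add_eq_0_iff)
    thus False using assms by simp
  qed
  have "1 - z\<^sup>2 = (1 - z) * (1 + z)" by (simp add: algebra_simps power2_eq_square)
  thus "1 - z\<^sup>2 \<noteq> 0" using a b by simp
qed

lemma phi_psi:
  fixes z :: complex assumes "cmod z < 1"
  shows "phi \<alpha> z = (psi (1 - \<alpha>) (1 + \<alpha>) ((1 + z) / (1 - z)) + 2 * of_real \<alpha>) / 4"
  using disk_ne[OF assms] unfolding phi_def psi_def
  by (simp add: field_simps power2_eq_square)

lemma cayley_inv: fixes z :: complex assumes "cmod z < 1"
  shows "((1 + z) / (1 - z) - 1) / ((1 + z) / (1 - z) + 1) = z"
  using disk_ne[OF assms] by (simp add: field_simps)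

lemma cayley_inv2: fixes w :: complex assumes "Re w > 0"
  shows "cmod ((w - 1) / (w + 1)) < 1" "(1 + (w - 1) / (w + 1)) / (1 - (w - 1) / (w + 1)) = w"
proof -
  have nz: "w + 1 \<noteq> 0" using assms by (metis add_eq_0_iff Re_complex_of_real zero_less_one neg_less_0_iff_less one_complex.sel uminus_complex.sel less_asym)
  have "cmod (w - 1) < cmod (w + 1)"
    using assms by (simp add: cmod_def power2_eq_square algebra_simps)
  thus "cmod ((w - 1) / (w + 1)) < 1" using nz by (simp add: norm_divide divide_less_eq)
  have a: "1 + (w - 1) / (w + 1) = 2 * w / (w + 1)" using nz by (simp add: field_simps)
  have b: "1 - (w - 1) / (w + 1) = 2 / (w + 1)" using nz by (simp add: field_simps)
  show "(1 + (w - 1) / (w + 1)) / (1 - (w - 1) / (w + 1)) = w" unfolding a b using nz by simp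
qed

lemma phi_inj:
  assumes "\<alpha> \<in> {-1..1}" "cmod z1 < 1" "cmod z2 < 1" "phi \<alpha> z1 = phi \<alpha> z2"
  shows "z1 = z2"
proof (rule ccontr)
  assume ne: "z1 \<noteq> z2"
  define w1 where "w1 = (1 + z1) / (1 - z1)"
  define w2 where "w2 = (1 + z2) / (1 - z2)"
  have r1: "Re w1 > 0" "Re w2 > 0" using Re_cayley_pos assms w1_def w2_def by auto
  note n1 = disk_ne[OF assms(2)] and n2 = disk_ne[OF assms(3)]
  define K where "K = (1 + z1 * z2) - of_real \<alpha> * (z1 + z2)"
  have eq: "phi \<alpha> z1 - phi \<alpha> z2 = (z1 - z2) * K / ((1 - z1\<^sup>2) * (1 - z2\<^sup>2))"
    unfolding phi_def K_def using n1 n2 by (simp add: field_simps power2_eq_square)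
  have K2: "2 * K = (1 - z1) * (1 - z2) * (of_real (1 - \<alpha>) * w1 * w2 + of_real (1 + \<alpha>))"
  proof -
    have e1: "(1 - z1) * w1 = 1 + z1" using n1 by (simp add: w1_def)
    have e2: "(1 - z2) * w2 = 1 + z2" using n2 by (simp add: w2_def)
    have "(1 - z1) * (1 - z2) * (of_real (1 - \<alpha>) * w1 * w2 + of_real (1 + \<alpha>))
       = of_real (1 - \<alpha>) * ((1 - z1) * w1) * ((1 - z2) * w2) + of_real (1 + \<alpha>) * (1 - z1) * (1 - z2)"
      by (simp add: algebra_simps)
    also have "\<dots> = 2 * K" unfolding e1 e2 K_def by (simp add: algebra_simps)
    finally show ?thesis by simp
  qed
  have "of_real (1 - \<alpha>) * w1 * w2 + of_real (1 + \<alpha>) \<noteq> 0"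
  proof (cases "\<alpha> = 1")
    case True then show ?thesis by simp
  next
    case False
    hence pos: "1 - \<alpha> > 0" using assms(1) by auto
    have "w1 * w2 \<noteq> - of_real ((1 + \<alpha>) / (1 - \<alpha>))"
      by (rule rhp_prod) (use r1 assms(1) pos in auto)
    show ?thesis
    proof
      assume h: "of_real (1 - \<alpha>) * w1 * w2 + of_real (1 + \<alpha>) = 0"
      have "of_real (1 - \<alpha>) * (w1 * w2) = - of_real (1 + \<alpha>)" using h by (simp add: algebra_simps add_eq_0_iff)
      hence "w1 * w2 = - of_real (1 + \<alpha>) / of_real (1 - \<alpha>)" using pos by (simp add: field_simps)
      moreover have "(1::complex) - of_real \<alpha> \<noteq> 0" using pos
        by (metis diff_gt_0_iff_gt less_irrefl of_real_1 of_real_eq_iff right_minus_eq)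
      ultimately show False using \<open>w1 * w2 \<noteq> _\<close> by (simp add: field_simps)
    qed
  qed
  hence "K \<noteq> 0" using K2 n1 n2 by auto
  hence "phi \<alpha> z1 - phi \<alpha> z2 \<noteq> 0" using eq ne n1 n2 by simp
  thus False using assms(4) by simp
qed

lemma psi_ReIm:
  fixes w :: complex assumes "w \<noteq> 0"
  shows "Re (psi A B w) = A * Re w - B * Re w / ((Re w)^2 + (Im w)^2)"
    "Im (psi A B w) = A * Im w + B * Im w / ((Re w)^2 + (Im w)^2)"
  unfolding psi_def by (simp_all add: Re_divide Im_divide)

lemma psi_re0:
  fixes w :: complex
  assumes "A > 0" "B \<ge> 0" "Re w > 0" "Re (psi A B w) = 0"
  shows "(Im (psi A B w))^2 < 4 * A * B"
proof -
  define u where "u = Re w"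
  define v where "v = Im w"
  define N where "N = u^2 + v^2"
  have w0: "w \<noteq> 0" using assms(3) by auto
  have u0: "u > 0" using assms(3) u_def by simp
  have N0: "N > 0" unfolding N_def using u0 by (simp add: add_pos_nonneg)
  have "A * u - B * u / N = 0" using psi_ReIm(1)[OF w0, of A B] assms(4) by (simp add: u_def v_def N_def)
  hence "u * (A - B / N) = 0" by (simp add: algebra_simps)
  hence AN: "A = B / N" using u0 by simp
  have "Im (psi A B w) = A * v + B * v / N" using psi_ReIm(2)[OF w0, of A B] by (simp add: u_def v_def N_def)
  also have "\<dots> = 2 * A * v" using AN by simp
  finally have im: "Im (psi A B w) = 2 * A * v" .
  have BN: "B = A * N" using AN N0 by (simp add: field_simps)
  have "v^2 < N" unfolding N_def using u0 by simp
  hence "A^2 * v^2 < A^2 * N" using assms(1) by simp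
  moreover have "(Im (psi A B w))^2 = 4 * (A^2 * v^2)" unfolding im by (simp add: power2_eq_square)
  moreover have "4 * A * B = 4 * (A^2 * N)" unfolding BN by (simp add: power2_eq_square)
  ultimately show ?thesis by linarith
qed


lemma convex_sq:
  fixes a b u K :: real
  assumes "0 \<le> u" "u \<le> 1" "a^2 < K" "b^2 < K"
  shows "((1 - u) * a + u * b)^2 < K"
proof -
  have "((1 - u) * a + u * b)^2 = (1 - u) * a^2 + u * b^2 - u * (1 - u) * (a - b)^2"
    by (simp add: power2_eq_square algebra_simps)
  also have "\<dots> \<le> (1 - u) * a^2 + u * b^2" using assms by simp
  also have "\<dots> < K"
  proof -
    have "(1 - u) * a^2 \<le> (1 - u) * K" using assms by (intro mult_left_mono) auto
    moreover have "u * b^2 \<le> u * K" using assms by (intro mult_left_mono) auto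
    moreover have "(1 - u) * a^2 < (1 - u) * K \<or> u * b^2 < u * K"
      using assms by (cases "u = 0") auto
    ultimately show ?thesis by (auto simp: algebra_simps)
  qed
  finally show ?thesis .
qed

lemma psi_slice:
  fixes w1 w2 \<eta> :: complex and A B u :: real
  assumes AB: "A \<ge> 0" "B \<ge> 0" "A + B > 0" and w: "Re w1 > 0" "Re w2 > 0"
    and re: "Re (psi A B w1) = Re (psi A B w2)" and u: "0 \<le> u" "u \<le> 1"
    and eta: "\<eta> = of_real (1 - u) * psi A B w1 + of_real u * psi A B w2"
  shows "\<exists>w. Re w > 0 \<and> psi A B w = \<eta>"
proof -
  have w10: "w1 \<noteq> 0" using w by auto
  have "Re \<eta> = (1 - u) * Re (psi A B w1) + u * Re (psi A B w2)" using eta by simp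
  hence Reeta: "Re \<eta> = Re (psi A B w1)" using re by (simp add: algebra_simps)
  have Imeta: "Im \<eta> = (1 - u) * Im (psi A B w1) + u * Im (psi A B w2)" using eta by simp
  have N1: "(Re w1)^2 + (Im w1)^2 > 0" using w by (simp add: add_pos_nonneg)
  show ?thesis
  proof (cases "A = 0")
    case True
    hence B0: "B > 0" using AB by simp
    have "B * Re w1 / ((Re w1)^2 + (Im w1)^2) > 0" using B0 w N1 by simp
    hence "Re (psi A B w1) < 0" using psi_ReIm(1)[OF w10, of A B] True by simp
    hence r: "Re \<eta> < 0" using Reeta by simp
    hence e0: "\<eta> \<noteq> 0" by auto
    define w where "w = - of_real B / \<eta>"
    have "Re w = (- B * Re \<eta>) / ((Re \<eta>)^2 + (Im \<eta>)^2)"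
      unfolding w_def by (simp add: Re_divide)
    moreover have "(Re \<eta>)^2 + (Im \<eta>)^2 > 0" using r by (simp add: add_pos_nonneg)
    moreover have "- B * Re \<eta> > 0" using r B0 by (simp add: mult_pos_neg)
    ultimately have "Re w > 0" by (simp add: divide_neg_pos)
    moreover have "psi A B w = \<eta>" unfolding psi_def w_def using True B0 e0 by simp
    ultimately show ?thesis by blast
  next
    case False
    hence A0: "A > 0" using AB by simp
    have cA: "(of_real A :: complex) \<noteq> 0" using A0 by simp
    define s where "s = csqrt (\<eta>^2 + of_real (4 * A * B))"
    define w where "w = (\<eta> + s) / (2 * of_real A)"
    have s2: "s^2 = \<eta>^2 + of_real (4 * A * B)" unfolding s_def by simp
    have Res: "Re s \<ge> 0" unfolding s_def by (rule Re_csqrt)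
    have quad: "of_real A * w^2 - \<eta> * w - of_real B = 0"
    proof -
      have "of_real A * w^2 - \<eta> * w - of_real B = (s^2 - \<eta>^2 - 4 * of_real A * of_real B) / (4 * of_real A)"
        unfolding w_def using cA by (simp add: field_simps power2_eq_square)
      also have "\<dots> = 0" unfolding s2 by simp
      finally show ?thesis .
    qed
    have psi_eq: "psi A B w = \<eta>" if "w \<noteq> 0"
    proof -
      have "psi A B w = (of_real A * w^2 - of_real B) / w" unfolding psi_def using that
        by (simp add: field_simps power2_eq_square)
      also have "of_real A * w^2 - of_real B = \<eta> * w" using quad by (simp add: algebra_simps)
      finally show ?thesis using that by simp
    qed
    have Rew: "Re w > 0"
    proof (rule ccontr)
      assume nw: "\<not> Re w > 0"
      define w' where "w' = (\<eta> - s) / (2 * of_real A)"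
      have prod: "w * w' = - of_real (B / A)"
      proof -
        have "w * w' = (\<eta>^2 - s^2) / (4 * (of_real A)^2)" unfolding w_def w'_def using cA
          by (simp add: field_simps power2_eq_square)
        also have "\<dots> = - of_real (B / A)" unfolding s2 using cA by (simp add: field_simps power2_eq_square)
        finally show ?thesis .
      qed
      have Rew_eq: "Re w = (Re \<eta> + Re s) / (2 * A)" unfolding w_def
        by (simp add: Re_divide_of_real[symmetric])
      have Rew'_eq: "Re w' = (Re \<eta> - Re s) / (2 * A)" unfolding w'_def
        by (simp add: Re_divide_of_real[symmetric])
      have Rew': "Re w' \<le> Re w" unfolding Rew_eq Rew'_eq using Res A0 by (simp add: divide_right_mono)
      show False
      proof (cases "B = 0")
        case True
        have "A * Re w1 > 0" using A0 w by simp
        hence "Re \<eta> > 0" using Reeta psi_ReIm(1)[OF w10, of A B] True by simp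
        hence "Re w > 0" unfolding Rew_eq using Res A0 by simp
        thus False using nw by simp
      next
        case False
        hence B0: "B > 0" using AB by simp
        have Re0: "Re w = 0"
        proof (rule ccontr)
          assume "Re w \<noteq> 0"
          hence "Re (-w) > 0" using nw by simp
          moreover have "Re (-w') > 0" using \<open>Re (-w) > 0\<close> Rew' by simp
          ultimately have "(-w) * (-w') \<noteq> - of_real (B / A)" using B0 A0 by (intro rhp_prod) auto
          thus False using prod by simp
        qed
        have wn0: "w \<noteq> 0"
        proof
          assume "w = 0"
          hence "of_real (B / A) = (0::complex)" using prod by simp
          thus False using A0 B0 by simp
        qed
        have pe: "psi A B w = \<eta>" using psi_eq wn0 by simp
        define y where "y = Im w"
        have y0: "y \<noteq> 0" using wn0 Re0 y_def complex_eq_iff by force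
        have "Re \<eta> = 0" using psi_ReIm(1)[OF wn0, of A B] pe Re0 by simp
        hence r1: "Re (psi A B w1) = 0" and r2: "Re (psi A B w2) = 0" using Reeta re by auto
        have i1: "(Im (psi A B w1))^2 < 4 * A * B" by (rule psi_re0) (use A0 AB w r1 in auto)
        have i2: "(Im (psi A B w2))^2 < 4 * A * B" by (rule psi_re0) (use A0 AB w r2 in auto)
        have "(Im \<eta>)^2 < 4 * A * B" unfolding Imeta using convex_sq[OF u i1 i2] .
        moreover have "Im \<eta> = A * y + B / y"
          using psi_ReIm(2)[OF wn0, of A B] pe Re0 y0 by (simp add: y_def power2_eq_square)
        moreover have "(A * y + B / y)^2 = 4 * A * B + (A * y - B / y)^2"
          using y0 by (simp add: power2_eq_square field_simps)
        ultimately show False by (smt (verit) zero_le_power2)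
      qed
    qed
    hence "w \<noteq> 0" by auto
    thus ?thesis using Rew psi_eq by blast
  qed
qed
lemma phi_slice:
  assumes "\<alpha> \<in> {-1..1}" "cmod z1 < 1" "cmod z2 < 1" "Re (phi \<alpha> z1) = Re (phi \<alpha> z2)"
    and "\<zeta> \<in> closed_segment (phi \<alpha> z1) (phi \<alpha> z2)"
  shows "\<exists>z. cmod z < 1 \<and> phi \<alpha> z = \<zeta>"
proof -
  obtain u where u: "0 \<le> u" "u \<le> 1" and ze: "\<zeta> = (1 - u) *\<^sub>R phi \<alpha> z1 + u *\<^sub>R phi \<alpha> z2"
    using assms(5) unfolding closed_segment_def by blast
  define w1 where "w1 = (1 + z1) / (1 - z1)"
  define w2 where "w2 = (1 + z2) / (1 - z2)"
  have r1: "Re w1 > 0" "Re w2 > 0" using Re_cayley_pos assms w1_def w2_def by auto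
  have p1: "phi \<alpha> z1 = (psi (1 - \<alpha>) (1 + \<alpha>) w1 + 2 * of_real \<alpha>) / 4" using phi_psi assms(2) w1_def by simp
  have p2: "phi \<alpha> z2 = (psi (1 - \<alpha>) (1 + \<alpha>) w2 + 2 * of_real \<alpha>) / 4" using phi_psi assms(3) w2_def by simp
  define \<eta> where "\<eta> = 4 * \<zeta> - 2 * of_real \<alpha>"
  have eta: "\<eta> = of_real (1 - u) * psi (1 - \<alpha>) (1 + \<alpha>) w1 + of_real u * psi (1 - \<alpha>) (1 + \<alpha>) w2"
    unfolding \<eta>_def ze p1 p2 by (simp add: scaleR_conv_of_real field_simps)
  have re: "Re (psi (1 - \<alpha>) (1 + \<alpha>) w1) = Re (psi (1 - \<alpha>) (1 + \<alpha>) w2)"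
    using assms(4) unfolding p1 p2 by simp
  obtain w where w: "Re w > 0" "psi (1 - \<alpha>) (1 + \<alpha>) w = \<eta>"
    using psi_slice[OF _ _ _ r1 re u eta] assms(1) by auto
  define z where "z = (w - 1) / (w + 1)"
  have z: "cmod z < 1" "(1 + z) / (1 - z) = w" using cayley_inv2[OF w(1)] z_def by auto
  have "phi \<alpha> z = \<zeta>" using phi_psi[OF z(1), of \<alpha>] unfolding z(2) w(2) \<eta>_def by simp
  thus ?thesis using z by blast
qed


lemma DERIV_Im_line:
  fixes G :: "complex \<Rightarrow> complex"
  assumes "(G has_field_derivative G') (at (a + of_real s * d))"
  shows "((\<lambda>s. Im (G (a + of_real s * d))) has_real_derivative Im (d * G')) (at s)"
proof -
  have c: "((\<lambda>s::real. a + of_real s * d) has_vector_derivative d) (at s)"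
    by (auto intro!: derivative_eq_intros simp: has_vector_derivative_def scaleR_conv_of_real)
  have "((G \<circ> (\<lambda>s::real. a + of_real s * d)) has_vector_derivative (d * G')) (at s)"
    using field_vector_diff_chain_at[OF c] assms by simp
  hence "((\<lambda>s. G (a + of_real s * d)) has_derivative (\<lambda>x. x *\<^sub>R (d * G'))) (at s)"
    by (simp add: has_vector_derivative_def o_def)
  from bounded_linear.has_derivative[OF bounded_linear_Im this]
  have "((\<lambda>s. Im (G (a + of_real s * d))) has_derivative (\<lambda>x. Im (x *\<^sub>R (d * G')))) (at s)" .
  moreover have "(\<lambda>x. Im (x *\<^sub>R (d * G'))) = (*) (Im (d * G'))" by (auto simp: mult.commute)
  ultimately show ?thesis by (simp add: has_field_derivative_def)
qed

lemma Im_ne0: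
  fixes d A B :: complex
  assumes "Re d = 0" "Im d \<noteq> 0" "Re (A * cnj B) > 0"
  shows "Im (d * (A * inverse B)) \<noteq> 0"
proof -
  have B0: "B \<noteq> 0" using assms(3) by auto
  have "A * inverse B = A * cnj B / of_real ((cmod B)^2)"
  proof -
    have "A * inverse B = A * cnj B / (B * cnj B)" using B0 by (simp add: field_simps)
    also have "B * cnj B = of_real ((cmod B)^2)" by (rule complex_norm_square[symmetric])
    finally show ?thesis .
  qed
  hence "Re (A * inverse B) = Re (A * cnj B) / (cmod B)^2" by (simp add: Re_divide_of_real)
  moreover have "(cmod B)^2 > 0" using B0 by simp
  ultimately have "Re (A * inverse B) > 0" using assms(3) by simp
  moreover have "Im (d * (A * inverse B)) = Re d * Im (A * inverse B) + Im d * Re (A * inverse B)"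
    by (simp only: times_complex.sel)
  ultimately show ?thesis using assms(1,2) by simp
qed

lemma Re_diff_sq:
  fixes H G :: complex
  shows "Re ((H - G) * cnj (H + G)) = (cmod H)^2 - (cmod G)^2"
  unfolding cmod_power2 by (simp add: algebra_simps power2_eq_square)

lemma seg_param:
  fixes a b :: complex
  assumes "0 \<le> s" "s \<le> 1"
  shows "a + of_real s * (b - a) \<in> closed_segment a b"
  unfolding closed_segment_def using assms
  by (auto intro!: exI[of _ s] simp: scaleR_conv_of_real algebra_simps)

lemma Re_seg:
  fixes a b :: complex
  assumes "\<zeta> \<in> closed_segment a b" "Re a = c" "Re b = c"
  shows "Re \<zeta> = c"
proof -
  obtain u where "\<zeta> = (1 - u) *\<^sub>R a + u *\<^sub>R b" using assms(1) unfolding closed_segment_def by blast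
  hence "Re \<zeta> = (1 - u) * Re a + u * Re b" by simp
  thus ?thesis using assms by (simp add: algebra_simps)
qed

lemma sp_pos:
  fixes H G :: complex
  assumes "H \<noteq> 0" "cmod (G / H) < 1"
  shows "Re ((H - G) * cnj (H + G)) > 0"
proof -
  have "cmod G < cmod H" using assms by (simp add: norm_divide divide_less_eq)
  hence "(cmod G)^2 < (cmod H)^2" by (simp add: power_strict_mono)
  thus ?thesis unfolding Re_diff_sq by simp
qed

lemma pos_sp:
  fixes H G :: complex
  assumes "Re ((H - G) * cnj (H + G)) > 0"
  shows "H \<noteq> 0" "cmod (G / H) < 1"
proof -
  have "(cmod G)^2 < (cmod H)^2" using assms unfolding Re_diff_sq by simp
  hence lt: "cmod G < cmod H" using power2_less_imp_less by fastforce
  thus "H \<noteq> 0" by auto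
  thus "cmod (G / H) < 1" using lt by (simp add: norm_divide divide_less_eq)
qed


theorem theorem2p3:
  fixes h1 g1 h2 g2 :: "complex \<Rightarrow> complex" and \<alpha>1 \<alpha>2 t :: real
  assumes "\<alpha>1 \<in> {-1..1}" and "\<alpha>2 \<in> {-1..1}"
    and "S_H h1 g1" and "S_H h2 g2"
    and "\<And>z. z \<in> unit_disk \<Longrightarrow> h1 z + g1 z = z * (1 - of_real \<alpha>1 * z) / (1 - z\<^sup>2)"
    and "\<And>z. z \<in> unit_disk \<Longrightarrow> h2 z + g2 z = z * (1 - of_real \<alpha>2 * z) / (1 - z\<^sup>2)"
    and "\<alpha>1 = \<alpha>2"
    and "0 \<le> t" and "t \<le> 1"
  shows "S_H (\<lambda>z. of_real t * h1 z + of_real (1 - t) * h2 z)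
             (\<lambda>z. of_real t * g1 z + of_real (1 - t) * g2 z)
       \<and> open (harm (\<lambda>z. of_real t * h1 z + of_real (1 - t) * h2 z)
                    (\<lambda>z. of_real t * g1 z + of_real (1 - t) * g2 z) ` unit_disk)
       \<and> connected (harm (\<lambda>z. of_real t * h1 z + of_real (1 - t) * h2 z)
                    (\<lambda>z. of_real t * g1 z + of_real (1 - t) * g2 z) ` unit_disk)
       \<and> convex_imag_dir (harm (\<lambda>z. of_real t * h1 z + of_real (1 - t) * h2 z)
                    (\<lambda>z. of_real t * g1 z + of_real (1 - t) * g2 z) ` unit_disk)"
proof -
  define E where "E = (unit_disk :: complex set)"
  have oE: "open E" unfolding E_def by simp
  have memE: "\<And>z. z \<in> E \<longleftrightarrow> cmod z < 1" unfolding E_def by simp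
  have hol1: "h1 holomorphic_on E" "g1 holomorphic_on E" and sp1: "sense_preserving h1 g1"
    and v1: "h1 0 = 0" "g1 0 = 0" "deriv h1 0 = 1"
    using assms(3) unfolding S_H_def E_def by auto
  have hol2: "h2 holomorphic_on E" "g2 holomorphic_on E" and sp2: "sense_preserving h2 g2"
    and v2: "h2 0 = 0" "g2 0 = 0" "deriv h2 0 = 1"
    using assms(4) unfolding S_H_def E_def by auto
  define P where "P = (\<lambda>z. h1 z + g1 z)"
  define h where "h = (\<lambda>z. of_real t * h1 z + of_real (1 - t) * h2 z)"
  define g where "g = (\<lambda>z. of_real t * g1 z + of_real (1 - t) * g2 z)"
  define F where "F = (\<lambda>z. h z - g z)"
  define f where "f = harm h g"
  have Pphi: "P z = phi \<alpha>1 z" if "z \<in> E" for z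
    using assms(5) that unfolding P_def phi_def E_def by simp
  have P2: "h2 z + g2 z = P z" if "z \<in> E" for z
    using assms(5,6,7) that unfolding P_def E_def by simp
  have hgP: "h z + g z = P z" if "z \<in> E" for z
  proof -
    have "h z + g z = of_real t * (h1 z + g1 z) + of_real (1 - t) * (h2 z + g2 z)"
      unfolding h_def g_def by (simp add: algebra_simps)
    also have "\<dots> = (of_real t + of_real (1 - t)) * P z" using P2[OF that] by (simp add: P_def algebra_simps)
    finally show ?thesis by simp
  qed
  have hol_h: "h holomorphic_on E" unfolding h_def using hol1 hol2 by (intro holomorphic_intros)
  have hol_g: "g holomorphic_on E" unfolding g_def using hol1 hol2 by (intro holomorphic_intros)
  have hol_P: "P holomorphic_on E" unfolding P_def using hol1 by (intro holomorphic_intros)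
  have hol_F: "F holomorphic_on E" unfolding F_def using hol_h hol_g by (intro holomorphic_intros)
  have D: "(h has_field_derivative of_real t * deriv h1 z + of_real (1 - t) * deriv h2 z) (at z)
         \<and> (g has_field_derivative of_real t * deriv g1 z + of_real (1 - t) * deriv g2 z) (at z)
         \<and> deriv h1 z + deriv g1 z = deriv h2 z + deriv g2 z" if z: "z \<in> E" for z
  proof -
    have a: "(h1 has_field_derivative deriv h1 z) (at z)" by (rule holomorphic_derivI[OF hol1(1) oE z])
    have b: "(g1 has_field_derivative deriv g1 z) (at z)" by (rule holomorphic_derivI[OF hol1(2) oE z])
    have c: "(h2 has_field_derivative deriv h2 z) (at z)" by (rule holomorphic_derivI[OF hol2(1) oE z])
    have d: "(g2 has_field_derivative deriv g2 z) (at z)" by (rule holomorphic_derivI[OF hol2(2) oE z])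
    have "((\<lambda>z. h2 z + g2 z) has_field_derivative deriv h2 z + deriv g2 z) (at z)"
      using c d by (rule DERIV_add)
    hence "(P has_field_derivative deriv h2 z + deriv g2 z) (at z)"
      by (rule has_field_derivative_transform_within_open[OF _ oE z]) (use P2 in auto)
    moreover have "(P has_field_derivative deriv h1 z + deriv g1 z) (at z)"
      unfolding P_def using a b by (rule DERIV_add)
    ultimately have e: "deriv h1 z + deriv g1 z = deriv h2 z + deriv g2 z" by (rule DERIV_unique[rotated])
    have "(h has_field_derivative of_real t * deriv h1 z + of_real (1 - t) * deriv h2 z) (at z)"
      unfolding h_def using a c by (intro DERIV_add DERIV_cmult)
    moreover have "(g has_field_derivative of_real t * deriv g1 z + of_real (1 - t) * deriv g2 z) (at z)"
      unfolding g_def using b d by (intro DERIV_add DERIV_cmult)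
    ultimately show ?thesis using e by blast
  qed
  have key: "Re ((deriv h z - deriv g z) * cnj (deriv h z + deriv g z)) > 0" if z: "z \<in> E" for z
  proof -
    note Dz = D[OF z]
    define H1 where "H1 = deriv h1 z"
    define G1 where "G1 = deriv g1 z"
    define H2 where "H2 = deriv h2 z"
    define G2 where "G2 = deriv g2 z"
    have dh: "deriv h z = of_real t * H1 + of_real (1 - t) * H2" using Dz DERIV_imp_deriv H1_def H2_def by blast
    have dg: "deriv g z = of_real t * G1 + of_real (1 - t) * G2" using Dz DERIV_imp_deriv G1_def G2_def by blast
    have e: "H1 + G1 = H2 + G2" using Dz H1_def G1_def H2_def G2_def by blast
    have zE: "z \<in> unit_disk" using z E_def by simp
    have p1: "Re ((H1 - G1) * cnj (H1 + G1)) > 0"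
      using sp1 zE unfolding sense_preserving_def H1_def G1_def by (intro sp_pos) auto
    have p2: "Re ((H2 - G2) * cnj (H2 + G2)) > 0"
      using sp2 zE unfolding sense_preserving_def H2_def G2_def by (intro sp_pos) auto
    have sum: "deriv h z + deriv g z = H1 + G1"
    proof -
      have "deriv h z + deriv g z = of_real t * (H1 + G1) + of_real (1 - t) * (H2 + G2)"
        unfolding dh dg by (simp add: algebra_simps)
      also have "\<dots> = (of_real t + of_real (1 - t)) * (H1 + G1)" unfolding e by (simp add: algebra_simps)
      finally show ?thesis by simp
    qed
    have diff: "deriv h z - deriv g z = of_real t * (H1 - G1) + of_real (1 - t) * (H2 - G2)"
      unfolding dh dg by (simp add: algebra_simps)
    have "(deriv h z - deriv g z) * cnj (deriv h z + deriv g z)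
        = of_real t * ((H1 - G1) * cnj (H1 + G1)) + of_real (1 - t) * ((H2 - G2) * cnj (H1 + G1))"
      unfolding diff sum by (simp add: algebra_simps)
    hence "Re ((deriv h z - deriv g z) * cnj (deriv h z + deriv g z))
        = t * Re ((H1 - G1) * cnj (H1 + G1)) + (1 - t) * Re ((H2 - G2) * cnj (H1 + G1))"
      by simp
    moreover have c: "(H2 - G2) * cnj (H1 + G1) = (H2 - G2) * cnj (H2 + G2)" using e by simp
    ultimately have "Re ((deriv h z - deriv g z) * cnj (deriv h z + deriv g z))
        = t * Re ((H1 - G1) * cnj (H1 + G1)) + (1 - t) * Re ((H2 - G2) * cnj (H2 + G2))"
      by (simp only: c)
    moreover have "t * Re ((H1 - G1) * cnj (H1 + G1)) + (1 - t) * Re ((H2 - G2) * cnj (H2 + G2)) > 0"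
    proof (cases "t = 0")
      case True thus ?thesis using p2 by simp
    next
      case False
      hence "t * Re ((H1 - G1) * cnj (H1 + G1)) > 0" using p1 assms(8) by simp
      moreover have "(1 - t) * Re ((H2 - G2) * cnj (H2 + G2)) \<ge> 0" using p2 assms(9) by simp
      ultimately show ?thesis by linarith
    qed
    ultimately show ?thesis by simp
  qed
  have sp: "sense_preserving h g"
    unfolding sense_preserving_def using key pos_sp unfolding E_def by blast
  have dF: "deriv F z = deriv h z - deriv g z" if z: "z \<in> E" for z
  proof -
    have "(F has_field_derivative deriv h z - deriv g z) (at z)"
      unfolding F_def using holomorphic_derivI[OF hol_h oE z] holomorphic_derivI[OF hol_g oE z] by (intro DERIV_diff)
    thus ?thesis by (rule DERIV_imp_deriv)
  qed
  have dP: "deriv P z = deriv h z + deriv g z" if z: "z \<in> E" for z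
  proof -
    have "((\<lambda>z. h z + g z) has_field_derivative deriv h z + deriv g z) (at z)"
      using holomorphic_derivI[OF hol_h oE z] holomorphic_derivI[OF hol_g oE z] by (intro DERIV_add)
    hence "(P has_field_derivative deriv h z + deriv g z) (at z)"
      by (rule has_field_derivative_transform_within_open[OF _ oE z]) (use hgP in auto)
    thus ?thesis by (rule DERIV_imp_deriv)
  qed
  have keyFP: "Re (deriv F z * cnj (deriv P z)) > 0" if z: "z \<in> E" for z
    using key[OF z] dF[OF z] dP[OF z] by simp
  have dP0: "deriv P z \<noteq> 0" if z: "z \<in> E" for z
    using keyFP[OF z] by auto
  have DP: "(P has_field_derivative deriv P z) (at z)" if z: "z \<in> E" for z
    by (rule holomorphic_derivI[OF hol_P oE z])
  have DF: "(F has_field_derivative deriv F z) (at z)" if z: "z \<in> E" for z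
    by (rule holomorphic_derivI[OF hol_F oE z])
  have fz: "f z = h z + cnj (g z)" for z unfolding f_def harm_def by simp
  have Ref: "Re (f z) = Re (P z)" if z: "z \<in> E" for z
  proof -
    have "Re (f z) = Re (h z + g z)" unfolding fz by simp
    thus ?thesis using hgP[OF z] by simp
  qed
  have Imf: "Im (f z) = Im (F z)" for z unfolding fz F_def by simp
  have injP: "inj_on P E"
  proof
    fix x y assume "x \<in> E" "y \<in> E" "P x = P y"
    thus "x = y" using phi_inj[OF assms(1)] Pphi memE by auto
  qed
  have contP: "continuous_on E P" using hol_P by (rule holomorphic_on_imp_continuous_on)
  define V where "V = P ` E"
  have oV: "open V" unfolding V_def by (rule invariance_of_domain[OF contP oE injP])
  define Q where "Q = inv_into E P"
  have QP: "Q (P z) = z" if "z \<in> E" for z unfolding Q_def using injP that by simp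
  have PQ: "P (Q w) = w" "Q w \<in> E" if "w \<in> V" for w
    unfolding Q_def using that V_def by (auto simp: f_inv_into_f inv_into_into)
  have contQ: "continuous_on V Q"
    unfolding V_def by (rule continuous_on_inverse_open[OF oE contP]) (use QP in auto)
  have DQ: "(Q has_field_derivative inverse (deriv P (Q w))) (at w)" if w: "w \<in> V" for w
  proof (rule has_field_derivative_inverse_basic[OF _ _ _ oV w])
    show "DERIV P (Q w) :> deriv P (Q w)" using DP PQ(2)[OF w] by blast
    show "deriv P (Q w) \<noteq> 0" using dP0 PQ(2)[OF w] by blast
    show "isCont Q w" using contQ oV w continuous_on_eq_continuous_at by blast
    show "\<And>z. z \<in> V \<Longrightarrow> P (Q z) = z" using PQ by blast
  qed
  have DG: "((\<lambda>w. F (Q w)) has_field_derivative deriv F (Q w) * inverse (deriv P (Q w))) (at w)"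
    if w: "w \<in> V" for w
    using DERIV_chain[OF DF[OF PQ(2)[OF w]] DQ[OF w]] by (simp add: o_def)
  have slice: "closed_segment (P z1) (P z2) \<subseteq> V"
    if z: "z1 \<in> E" "z2 \<in> E" and re: "Re (P z1) = Re (P z2)" for z1 z2
  proof
    fix \<zeta> assume "\<zeta> \<in> closed_segment (P z1) (P z2)"
    hence "\<zeta> \<in> closed_segment (phi \<alpha>1 z1) (phi \<alpha>1 z2)" using Pphi z by simp
    then obtain z where "cmod z < 1" "phi \<alpha>1 z = \<zeta>"
      using phi_slice[OF assms(1)] z re Pphi memE by metis
    thus "\<zeta> \<in> V" unfolding V_def using Pphi memE by (metis image_eqI)
  qed
  have injf: "inj_on f E"
  proof
    fix z1 z2 assume z: "z1 \<in> E" "z2 \<in> E" and eq: "f z1 = f z2"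
    have re: "Re (P z1) = Re (P z2)" using Ref z eq by metis
    have im: "Im (F z1) = Im (F z2)" using Imf eq by metis
    show "z1 = z2"
    proof (cases "P z1 = P z2")
      case True thus ?thesis using injP z by (meson inj_onD)
    next
      case False
      define d where "d = P z2 - P z1"
      have Red: "Re d = 0" using re d_def by simp
      have Imd: "Im d \<noteq> 0" using False Red d_def complex_eq_iff by force
      define k where "k = (\<lambda>s. Im (F (Q (P z1 + of_real s * d))))"
      have inV: "P z1 + of_real s * d \<in> V" if "0 \<le> s" "s \<le> 1" for s
        using slice[OF z re] seg_param[OF that, of "P z1" "P z2"] d_def by auto
      have Dk: "(k has_real_derivative Im (d * (deriv F (Q (P z1 + of_real s * d)) * inverse (deriv P (Q (P z1 + of_real s * d)))))) (at s)"
        if "0 \<le> s" "s \<le> 1" for s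
        unfolding k_def by (rule DERIV_Im_line[OF DG[OF inV[OF that]]])
      have k0: "k 0 = Im (F z1)" unfolding k_def using QP z by simp
      have k1: "k 1 = Im (F z2)" unfolding k_def d_def using QP z by simp
      have "continuous_on {0..1} k"
      proof (rule continuous_at_imp_continuous_on, intro ballI)
        fix s :: real assume "s \<in> {0..1}"
        hence "0 \<le> s" "s \<le> 1" by auto
        thus "isCont k s" by (rule DERIV_isCont[OF Dk])
      qed
      moreover have "k differentiable (at s)" if "0 < s" "s < 1" for s
      proof -
        have "0 \<le> s" "s \<le> 1" using that by auto
        from has_field_derivative_imp_has_derivative[OF Dk[OF this]] show ?thesis by (rule differentiableI)
      qed
      ultimately obtain s where s: "0 < s" "s < 1" "DERIV k s :> 0"
        using Rolle[of 0 1 k] k0 k1 im by auto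
      have "Im (d * (deriv F (Q (P z1 + of_real s * d)) * inverse (deriv P (Q (P z1 + of_real s * d))))) = 0"
        using DERIV_unique[OF Dk[of s] s(3)] s by simp
      moreover have "Q (P z1 + of_real s * d) \<in> E" using PQ(2) inV s by simp
      ultimately show ?thesis using Im_ne0[OF Red Imd keyFP] by blast
    qed
  qed
  have contf: "continuous_on E f"
  proof -
    have "continuous_on E h" "continuous_on E g" using hol_h hol_g holomorphic_on_imp_continuous_on by auto
    thus ?thesis unfolding f_def harm_def by (intro continuous_intros)
  qed
  have openf: "open (f ` E)" by (rule invariance_of_domain[OF contf oE injf])
  have connf: "connected (f ` E)" by (rule connected_continuous_image[OF contf]) (simp add: E_def)
  have cid: "convex_imag_dir (f ` E)"
    unfolding convex_imag_dir_def
  proof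
    fix c :: real
    show "connected (f ` E \<inter> {w. Re w = c})"
      unfolding connected_iff_connected_component
    proof (intro ballI)
      fix x y assume "x \<in> f ` E \<inter> {w. Re w = c}" "y \<in> f ` E \<inter> {w. Re w = c}"
      then obtain z1 z2 where z: "z1 \<in> E" "z2 \<in> E" and xy: "x = f z1" "y = f z2" and c: "Re (f z1) = c" "Re (f z2) = c"
        by auto
      have c': "Re (P z1) = c" "Re (P z2) = c" using c Ref z by auto
      have sub: "closed_segment (P z1) (P z2) \<subseteq> V" using slice z c' by simp
      define T where "T = (\<lambda>w. f (Q w)) ` closed_segment (P z1) (P z2)"
      have "continuous_on (closed_segment (P z1) (P z2)) (\<lambda>w. f (Q w))"
      proof -
        have "continuous_on (closed_segment (P z1) (P z2)) Q" using contQ sub continuous_on_subset by blast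
        moreover have "Q ` closed_segment (P z1) (P z2) \<subseteq> E" using PQ(2) sub by blast
        ultimately show ?thesis using continuous_on_compose2[OF contf] by blast
      qed
      hence "connected T" unfolding T_def by (rule connected_continuous_image) (rule connected_segment)
      moreover have "T \<subseteq> f ` E \<inter> {w. Re w = c}"
      proof
        fix v assume "v \<in> T"
        then obtain w where w: "w \<in> closed_segment (P z1) (P z2)" "v = f (Q w)" unfolding T_def by blast
        have wV: "w \<in> V" using w sub by blast
        have "Re v = Re (P (Q w))" using Ref PQ(2)[OF wV] w by simp
        also have "\<dots> = Re w" using PQ(1)[OF wV] by simp
        also have "\<dots> = c" using Re_seg[OF w(1) c'] .
        finally show "v \<in> f ` E \<inter> {w. Re w = c}" using w PQ(2)[OF wV] by auto
      qed
      moreover have "x \<in> T" unfolding T_def xy using QP z by (auto intro!: image_eqI[of _ _ "P z1"])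
      moreover have "y \<in> T" unfolding T_def xy using QP z by (auto intro!: image_eqI[of _ _ "P z2"])
      ultimately show "connected_component (f ` E \<inter> {w. Re w = c}) x y"
        by (rule connected_componentI)
    qed
  qed
  have SH: "S_H h g"
    unfolding S_H_def
  proof (intro conjI)
    show "h holomorphic_on unit_disk" "g holomorphic_on unit_disk" using hol_h hol_g E_def by auto
    show "inj_on (harm h g) unit_disk" using injf f_def E_def by simp
    show "sense_preserving h g" by (rule sp)
    show "h 0 = 0" "g 0 = 0" unfolding h_def g_def using v1 v2 by auto
    have "0 \<in> E" using memE by simp
    hence "deriv h 0 = of_real t * deriv h1 0 + of_real (1 - t) * deriv h2 0"
      using D DERIV_imp_deriv by blast
    thus "deriv h 0 = 1" using v1 v2 by simp
  qed
  show ?thesis using SH openf connf cid unfolding f_def E_def h_def g_def by simp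
qed

end
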